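(* Let $A$ be a race-free game and $\delta_A:D_A\to A^\perp\parallel A\parallel A$ the duplication map defined in the context. Then $D_A$ is deterministic (i.e. $\delta_A$ is a deterministic edc strategy) iff no two Opponent moves of $A$ are in immediate conflict: whenever $x$ is a configuration of $A$ and $a_1,a_2\notin x$ with $\mathrm{pol}_A(a_1)=\mathrm{pol}_A(a_2)=-$ and $x\cup\{a_1\}$, $x\cup\{a_2\}$ configurations, $x\cup\{a_1,a_2\}$ is a configuration of $A$.
   Context: A game $A$ is a prime event structure $(A,\le,\mathrm{Con})$ (partial order with finite down-sets; nonempty subset-closed family of finite consistent sets containing singletons with $X\in\mathrm{Con}$, $e\le e'\in X\Rightarrow X\cup\{e\}\in\mathrm{Con}$) with a polarity function $\mathrm{pol}_A:A\to\{+,-\}$; configurations are down-closed sets with all finite subsets consistent. It is race-free if $x\cup\{a\}$, $x\cup\{a'\}$ configurations with $a,a'$ of opposite polarity imply $x\cup\{a,a'\}$ is a configuration. $A^\perp$ reverses polarity. $A^\perp\parallel A\parallel A$ has events $(\{0\}\times A)\cup(\{1\}\times A)\cup(\{2\}\times A)$ with componentwise order, consistency (finite set consistent iff each component part is), and polarity (component 0 reversed). Duplication: a triple $(x,y_1,y_2)$ with $x$ a finite configuration of $A^\perp$ and $y_1,y_2$ finite configurations of $A$ is balanced if every $a\in y_1\cup y_2$ with $\mathrm{pol}_A(a)=+$ lies in $x$, and every $a\in x$ with $\mathrm{pol}_{A^\perp}(a)=+$ lies in $y_1$ or $y_2$. A choice function is $\chi:x^+\to\{1,2\}$ ($x^+$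 the events of $x$ positive in $A^\perp$) with $\chi(a)=i\Rightarrow a\in y_i$. The order $q(x,y_1,y_2;\chi)$ has underlying set $(\{0\}\times x)\cup(\{1\}\times y_1)\cup(\{2\}\times y_2)$ and the partial order generated by the order inherited from $A^\perp\parallel A\parallel A$ together with $(0,a)\le(i,a)$ for $a\in y_i$ with $\mathrm{pol}_A(a)=+$ ($i=1,2$), and $(\chi(a),a)\le(0,a)$ for $a\in x$ with $\mathrm{pol}_{A^\perp}(a)=+$. The edc $D_A$ has as events all such $q(x,y_1,y_2;\chi)$ possessing a top element, and $\delta_A(d)$ is the top element of $d$; $d\le d'$ iff the underlying set of $d$ is a down-closed subset of that of $d'$ and the order of $d$ is the restriction of that of $d'$; a finite $X\subseteq D_A$ is consistent iff $\delta_A$ of its down-closure is consistent in $A^\perp\parallel A\parallel A$; $d\equiv d'$ iff $\delta_A(d)=\delta_A(d')$; $\mathrm{pol}(d)$ is the polarity of $\delta_A(d)$. An edc with polarity $S$ (and any strategy with domain $S$) is deterministic if for every finite $X\subseteq S$, consistency of the set of negative events of the down-closure $[X]$ implies $X$ is consistent. *)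

theory Defs
  imports Main
begin

text \<open>Games: prime event structures with polarity. Polarity True means +, False means -.\<close>

record 'a game =
  evs :: "'a set"
  leq :: "'a \<Rightarrow> 'a \<Rightarrow> bool"
  con :: "'a set set"
  pol :: "'a \<Rightarrow> bool"

definition is_game :: "'a game \<Rightarrow> bool" where
  "is_game A \<longleftrightarrow>
     (\<forall>e e'. leq A e e' \<longrightarrow> e \<in> evs A \<and> e' \<in> evs A) \<and>
     (\<forall>e\<in>evs A. leq A e e) \<and>
     (\<forall>e e'. leq A e e' \<and> leq A e' e \<longrightarrow> e = e') \<and>
     (\<forall>e e' e''. leq A e e' \<and> leq A e' e'' \<longrightarrow> leq A e e'') \<and>
     (\<forall>e\<in>evs A. finite {e'. leq A e' e}) \<and>
     (\<forall>X\<in>con A. finite X \<and> X \<subseteq> evs A) \<and>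
     con A \<noteq> {} \<and>
     (\<forall>X Y. X \<in> con A \<and> Y \<subseteq> X \<longrightarrow> Y \<in> con A) \<and>
     (\<forall>e\<in>evs A. {e} \<in> con A) \<and>
     (\<forall>X e e'. X \<in> con A \<and> e' \<in> X \<and> leq A e e' \<longrightarrow> insert e X \<in> con A)"

definition config :: "'a game \<Rightarrow> 'a set \<Rightarrow> bool" where
  "config A x \<longleftrightarrow> x \<subseteq> evs A \<and>
     (\<forall>e\<in>x. \<forall>e'\<in>evs A. leq A e' e \<longrightarrow> e' \<in> x) \<and>
     (\<forall>X. X \<subseteq> x \<and> finite X \<longrightarrow> X \<in> con A)"

definition race_free :: "'a game \<Rightarrow> bool" where
  "race_free A \<longleftrightarrow> (\<forall>x a a'. config A x \<and> config A (insert a x) \<and> config A (insert a' x)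
      \<and> a \<in> evs A \<and> a' \<in> evs A \<and> pol A a \<noteq> pol A a' \<longrightarrow> config A (insert a (insert a' x)))"

definition no_neg_conflict :: "'a game \<Rightarrow> bool" where
  "no_neg_conflict A \<longleftrightarrow> (\<forall>x a1 a2. config A x \<and> a1 \<notin> x \<and> a2 \<notin> x \<and>
      \<not> pol A a1 \<and> \<not> pol A a2 \<and> config A (insert a1 x) \<and> config A (insert a2 x)
      \<longrightarrow> config A (insert a1 (insert a2 x)))"

text \<open>The game A^perp || A || A, on events (i,a) with i in {0,1,2}. Configurations of
  A^perp coincide with those of A; only polarity is reversed.\<close>

definition par_evs :: "'a game \<Rightarrow> (nat \<times> 'a) set" where
  "par_evs A = {0,1,2} \<times> evs A"

definition par_pol :: "'a game \<Rightarrow> nat \<times> 'a \<Rightarrow> bool" where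
  "par_pol A p = (if fst p = 0 then \<not> pol A (snd p) else pol A (snd p))"

definition par_con :: "'a game \<Rightarrow> (nat \<times> 'a) set \<Rightarrow> bool" where
  "par_con A Z \<longleftrightarrow> finite Z \<and> Z \<subseteq> par_evs A \<and>
     (\<forall>i\<in>{0,1,2}. {a. (i, a) \<in> Z} \<in> con A)"

definition balanced :: "'a game \<Rightarrow> 'a set \<Rightarrow> 'a set \<Rightarrow> 'a set \<Rightarrow> bool" where
  "balanced A x y1 y2 \<longleftrightarrow> finite x \<and> finite y1 \<and> finite y2 \<and>
     config A x \<and> config A y1 \<and> config A y2 \<and>
     (\<forall>a\<in>y1 \<union> y2. pol A a \<longrightarrow> a \<in> x) \<and>
     (\<forall>a\<in>x. \<not> pol A a \<longrightarrow> a \<in> y1 \<or> a \<in> y2)"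

text \<open>Choice function on x^+ (events of x positive in A^perp, i.e. negative in A).\<close>
definition choice :: "'a game \<Rightarrow> 'a set \<Rightarrow> 'a set \<Rightarrow> 'a set \<Rightarrow> ('a \<Rightarrow> nat) \<Rightarrow> bool" where
  "choice A x y1 y2 \<chi> \<longleftrightarrow> (\<forall>a\<in>x. \<not> pol A a \<longrightarrow>
     (\<chi> a = 1 \<and> a \<in> y1) \<or> (\<chi> a = 2 \<and> a \<in> y2))"

definition qset :: "'a set \<Rightarrow> 'a set \<Rightarrow> 'a set \<Rightarrow> (nat \<times> 'a) set" where
  "qset x y1 y2 = ({0} \<times> x) \<union> ({1} \<times> y1) \<union> ({2} \<times> y2)"

definition qbase :: "'a game \<Rightarrow> 'a set \<Rightarrow> 'a set \<Rightarrow> 'a set \<Rightarrow> ('a \<Rightarrow> nat)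
    \<Rightarrow> ((nat \<times> 'a) \<times> (nat \<times> 'a)) set" where
  "qbase A x y1 y2 \<chi> = {(p, p'). p \<in> qset x y1 y2 \<and> p' \<in> qset x y1 y2 \<and>
      ((fst p = fst p' \<and> leq A (snd p) (snd p')) \<or>
       (\<exists>a. p = (0, a) \<and> p' = (1, a) \<and> a \<in> y1 \<and> pol A a) \<or>
       (\<exists>a. p = (0, a) \<and> p' = (2, a) \<and> a \<in> y2 \<and> pol A a) \<or>
       (\<exists>a\<in>x. \<not> pol A a \<and> p = (\<chi> a, a) \<and> p' = (0, a)))}"

definition qord :: "'a game \<Rightarrow> 'a set \<Rightarrow> 'a set \<Rightarrow> 'a set \<Rightarrow> ('a \<Rightarrow> nat)
    \<Rightarrow> ((nat \<times> 'a) \<times> (nat \<times> 'a)) set" where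
  "qord A x y1 y2 \<chi> = Id_on (qset x y1 y2) \<union> (qbase A x y1 y2 \<chi>)\<^sup>+"

type_synonym 'a dev = "(nat \<times> 'a) set \<times> ((nat \<times> 'a) \<times> (nat \<times> 'a)) set"

definition has_top :: "'a dev \<Rightarrow> bool" where
  "has_top d \<longleftrightarrow> (\<exists>t\<in>fst d. \<forall>s\<in>fst d. (s, t) \<in> snd d)"

definition D_ev :: "'a game \<Rightarrow> 'a dev set" where
  "D_ev A = {d. \<exists>x y1 y2 \<chi>. balanced A x y1 y2 \<and> choice A x y1 y2 \<chi> \<and>
      d = (qset x y1 y2, qord A x y1 y2 \<chi>) \<and> has_top d}"

definition delta :: "'a dev \<Rightarrow> nat \<times> 'a" where
  "delta d = (THE t. t \<in> fst d \<and> (\<forall>s\<in>fst d. (s, t) \<in> snd d))"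

definition D_le :: "'a dev \<Rightarrow> 'a dev \<Rightarrow> bool" where
  "D_le d d' \<longleftrightarrow> fst d \<subseteq> fst d' \<and>
     (\<forall>t\<in>fst d. \<forall>s\<in>fst d'. (s, t) \<in> snd d' \<longrightarrow> s \<in> fst d) \<and>
     snd d = snd d' \<inter> (fst d \<times> fst d)"

definition D_down :: "'a game \<Rightarrow> 'a dev set \<Rightarrow> 'a dev set" where
  "D_down A X = {d \<in> D_ev A. \<exists>d'\<in>X. D_le d d'}"

definition D_con :: "'a game \<Rightarrow> 'a dev set \<Rightarrow> bool" where
  "D_con A X \<longleftrightarrow> finite X \<and> X \<subseteq> D_ev A \<and> par_con A (delta ` D_down A X)"

definition D_pol :: "'a game \<Rightarrow> 'a dev \<Rightarrow> bool" where
  "D_pol A d = par_pol A (delta d)"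

definition D_deterministic :: "'a game \<Rightarrow> bool" where
  "D_deterministic A \<longleftrightarrow> (\<forall>X. finite X \<and> X \<subseteq> D_ev A \<longrightarrow>
      D_con A {d \<in> D_down A X. \<not> D_pol A d} \<longrightarrow> D_con A X)"

end

theory Submission
  imports Defs
begin


lemma gD: assumes "is_game A" shows
  gD1: "\<forall>e e'. leq A e e' \<longrightarrow> e \<in> evs A \<and> e' \<in> evs A" and
  gD2: "\<forall>e\<in>evs A. leq A e e" and
  gD3: "\<forall>e e'. leq A e e' \<and> leq A e' e \<longrightarrow> e = e'" and
  gD4: "\<forall>e e' e''. leq A e e' \<and> leq A e' e'' \<longrightarrow> leq A e e''" and
  gD5: "\<forall>e\<in>evs A. finite {e'. leq A e' e}" and
  gD6: "\<forall>X\<in>con A. finite X \<and> X \<subseteq> evs A" and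
  gD7: "\<forall>X Y. X \<in> con A \<and> Y \<subseteq> X \<longrightarrow> Y \<in> con A" and
  gD8: "\<forall>X e e'. X \<in> con A \<and> e' \<in> X \<and> leq A e e' \<longrightarrow> insert e X \<in> con A"
proof -
  note h = assms[unfolded is_game_def]
  show "\<forall>e e'. leq A e e' \<longrightarrow> e \<in> evs A \<and> e' \<in> evs A" by (rule conjunct1[OF h])
  show "\<forall>e\<in>evs A. leq A e e" by (rule conjunct1[OF conjunct2[OF h]])
  show "\<forall>e e'. leq A e e' \<and> leq A e' e \<longrightarrow> e = e'" by (rule conjunct1[OF conjunct2[OF conjunct2[OF h]]])
  show "\<forall>e e' e''. leq A e e' \<and> leq A e' e'' \<longrightarrow> leq A e e''" by (rule conjunct1[OF conjunct2[OF conjunct2[OF conjunct2[OF h]]]])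
  show "\<forall>e\<in>evs A. finite {e'. leq A e' e}" by (rule conjunct1[OF conjunct2[OF conjunct2[OF conjunct2[OF conjunct2[OF h]]]]])
  show "\<forall>X\<in>con A. finite X \<and> X \<subseteq> evs A" by (rule conjunct1[OF conjunct2[OF conjunct2[OF conjunct2[OF conjunct2[OF conjunct2[OF h]]]]]])
  show "\<forall>X Y. X \<in> con A \<and> Y \<subseteq> X \<longrightarrow> Y \<in> con A" by (rule conjunct1[OF conjunct2[OF conjunct2[OF conjunct2[OF conjunct2[OF conjunct2[OF conjunct2[OF conjunct2[OF h]]]]]]]])
  show "\<forall>X e e'. X \<in> con A \<and> e' \<in> X \<and> leq A e e' \<longrightarrow> insert e X \<in> con A" by (rule conjunct2[OF conjunct2[OF conjunct2[OF conjunct2[OF conjunct2[OF conjunct2[OF conjunct2[OF conjunct2[OF conjunct2[OF h]]]]]]]]])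
qed

lemma g_leq_evs: "is_game A \<Longrightarrow> leq A e e' \<Longrightarrow> e \<in> evs A \<and> e' \<in> evs A"
  using gD1 by blast
lemma g_refl: "is_game A \<Longrightarrow> e \<in> evs A \<Longrightarrow> leq A e e"
  using gD2 by blast
lemma g_antisym: "is_game A \<Longrightarrow> leq A e e' \<Longrightarrow> leq A e' e \<Longrightarrow> e = e'"
  using gD3 by blast
lemma g_trans: "is_game A \<Longrightarrow> leq A e e' \<Longrightarrow> leq A e' e'' \<Longrightarrow> leq A e e''"
  using gD4 by blast
lemma g_fin_down: "is_game A \<Longrightarrow> e \<in> evs A \<Longrightarrow> finite {e'. leq A e' e}"
  using gD5 by blast
lemma g_con_sub: "is_game A \<Longrightarrow> X \<in> con A \<Longrightarrow> Y \<subseteq> X \<Longrightarrow> Y \<in> con A"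
  using gD7 by blast
lemma g_con_fin: "is_game A \<Longrightarrow> X \<in> con A \<Longrightarrow> finite X \<and> X \<subseteq> evs A"
  using gD6 by blast
lemma g_con_down: "is_game A \<Longrightarrow> X \<in> con A \<Longrightarrow> e' \<in> X \<Longrightarrow> leq A e e' \<Longrightarrow> insert e X \<in> con A"
  using gD8 by blast

lemma config_sub_evs: "config A x \<Longrightarrow> x \<subseteq> evs A" unfolding config_def by (elim conjE)
lemma config_down: assumes "is_game A" "config A x" "e \<in> x" "leq A e' e" shows "e' \<in> x"
proof -
  have "\<forall>e\<in>x. \<forall>e'\<in>evs A. leq A e' e \<longrightarrow> e' \<in> x" using assms(2) unfolding config_def by (elim conjE)
  moreover have "e' \<in> evs A" using g_leq_evs[OF assms(1,4)] by (elim conjE)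
  ultimately show ?thesis using assms(3,4) by simp
qed
lemma config_con: assumes "config A x" "X \<subseteq> x" "finite X" shows "X \<in> con A"
proof -
  have "\<forall>X. X \<subseteq> x \<and> finite X \<longrightarrow> X \<in> con A" using assms(1) unfolding config_def by (elim conjE)
  then show ?thesis using assms(2,3) by simp
qed
lemma configI: "x \<subseteq> evs A \<Longrightarrow> (\<And>e e'. e \<in> x \<Longrightarrow> leq A e' e \<Longrightarrow> e' \<in> x) \<Longrightarrow>
   (\<And>X. X \<subseteq> x \<Longrightarrow> finite X \<Longrightarrow> X \<in> con A) \<Longrightarrow> config A x"
  unfolding config_def by simp

lemma finite_has_min:
  assumes g: "is_game A" and "finite S" "S \<noteq> {}"
  shows "\<exists>f\<in>S. \<forall>g\<in>S. leq A g f \<longrightarrow> g = f"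
  using assms(2,3)
proof (induction S rule: finite_ne_induct)
  case (singleton x) then show ?case by simp
next
  case (insert x F)
  then obtain f where f: "f \<in> F" "\<forall>g\<in>F. leq A g f \<longrightarrow> g = f" by blast
  show ?case
  proof (cases "leq A x f")
    case True
    have "\<forall>g\<in>insert x F. leq A g x \<longrightarrow> g = x"
    proof
      fix g assume "g \<in> insert x F"
      then show "leq A g x \<longrightarrow> g = x"
        using f True g_trans[OF g, of g x f] g_antisym[OF g, of x f] by auto
    qed
    then show ?thesis by blast
  next
    case False
    then show ?thesis using f by auto
  qed
qed




lemma rfD: "race_free A \<Longrightarrow> config A x \<Longrightarrow> config A (insert a x) \<Longrightarrow> config A (insert a' x) \<Longrightarrow>
   a \<in> evs A \<Longrightarrow> a' \<in> evs A \<Longrightarrow> pol A a \<noteq> pol A a' \<Longrightarrow> config A (insert a (insert a' x))"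
  unfolding race_free_def by blast

lemma ncD: "no_neg_conflict A \<Longrightarrow> config A x \<Longrightarrow> a1 \<notin> x \<Longrightarrow> a2 \<notin> x \<Longrightarrow> \<not> pol A a1 \<Longrightarrow> \<not> pol A a2
   \<Longrightarrow> config A (insert a1 x) \<Longrightarrow> config A (insert a2 x) \<Longrightarrow> config A (insert a1 (insert a2 x))"
  unfolding no_neg_conflict_def by blast

lemma cfg_add_neg:
  assumes g: "is_game A" and rf: "race_free A" and nc: "no_neg_conflict A"
  shows "finite v \<Longrightarrow> config A u \<Longrightarrow> config A v \<Longrightarrow> u \<subseteq> v \<Longrightarrow> config A (insert e u)
     \<Longrightarrow> \<not> pol A e \<Longrightarrow> config A (insert e v)"
proof (induction "card (v - u)" arbitrary: u rule: less_induct)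
  case less
  show ?case
  proof (cases "e \<in> v")
    case True then show ?thesis using less.prems by (simp add: insert_absorb)
  next
    case ev: False
    show ?thesis
    proof (cases "v - u = {}")
      case True
      then have "u = v" using less.prems by blast
      then show ?thesis using less.prems by simp
    next
      case False
      obtain f where f: "f \<in> v - u" "\<forall>g\<in>v - u. leq A g f \<longrightarrow> g = f"
        using finite_has_min[OF g _ False] less.prems(1) by blast
      have eu: "e \<notin> u" using ev less.prems(4) by blast
      have ef: "e \<noteq> f" using ev f(1) by blast
      have evv: "v \<subseteq> evs A" using config_sub_evs[OF less.prems(3)] .
      have cfu: "config A (insert f u)"
      proof (rule configI)
        show "insert f u \<subseteq> evs A" using evv f(1) less.prems(4) by blast
      next
        fix e0 e' assume a: "e0 \<in> insert f u" "leq A e' e0"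
        show "e' \<in> insert f u"
        proof (cases "e0 = f")
          case True
          then have "e' \<in> v" using config_down[OF g less.prems(3)] a f(1) by blast
          then show ?thesis using f(2) a(2) True by blast
        next
          case False
          then have "e0 \<in> u" using a by blast
          then show ?thesis using config_down[OF g less.prems(2)] a(2) by blast
        qed
      next
        fix X assume "X \<subseteq> insert f u" "finite X"
        then show "X \<in> con A" using config_con[OF less.prems(3)] f(1) less.prems(4) by blast
      qed
      have ee: "e \<in> evs A" using config_sub_evs[OF less.prems(5)] by blast
      have fe: "f \<in> evs A" using evv f(1) by blast
      have c2: "config A (insert e (insert f u))"
      proof (cases "pol A f")
        case True
        then show ?thesis using rfD[OF rf less.prems(2) less.prems(5) cfu ee fe] less.prems(6) by simp
      next
        case False
        then show ?thesis using ncD[OF nc less.prems(2) eu _ less.prems(6) False less.prems(5) cfu] f(1) by blast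
      qed
      have lt: "card (v - insert f u) < card (v - u)"
      proof -
        have "v - insert f u = (v - u) - {f}" by blast
        then show ?thesis using f(1) less.prems(1) by (metis card_Diff1_less finite_Diff)
      qed
      show ?thesis
        by (rule less.hyps[OF lt less.prems(1) cfu less.prems(3) _ c2 less.prems(6)])
           (use f(1) less.prems(4) in blast)
    qed
  qed
qed


lemma cfg_union_neg:
  assumes g: "is_game A" and rf: "race_free A" and nc: "no_neg_conflict A"
  shows "finite x \<Longrightarrow> finite y \<Longrightarrow> config A x \<Longrightarrow> config A y \<Longrightarrow> \<forall>a\<in>y - x. \<not> pol A a
     \<Longrightarrow> config A (x \<union> y)"
proof (induction "card (y - x)" arbitrary: x rule: less_induct)
  case less
  show ?case
  proof (cases "y - x = {}")
    case True
    then have "x \<union> y = x" by blast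
    then show ?thesis using less.prems by simp
  next
    case False
    obtain f where f: "f \<in> y - x" "\<forall>g\<in>y - x. leq A g f \<longrightarrow> g = f"
      using finite_has_min[OF g _ False] less.prems(2) by blast
    have cu: "config A (x \<inter> y)"
    proof (rule configI)
      show "x \<inter> y \<subseteq> evs A" using config_sub_evs[OF less.prems(3)] by blast
    next
      fix e e' assume "e \<in> x \<inter> y" "leq A e' e"
      then show "e' \<in> x \<inter> y" using config_down[OF g less.prems(3)] config_down[OF g less.prems(4)] by blast
    next
      fix X assume "X \<subseteq> x \<inter> y" "finite X"
      then show "X \<in> con A" using config_con[OF less.prems(3)] by blast
    qed
    have cfu: "config A (insert f (x \<inter> y))"
    proof (rule configI)
      show "insert f (x \<inter> y) \<subseteq> evs A" using config_sub_evs[OF less.prems(4)] f(1) by blast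
    next
      fix e0 e' assume a: "e0 \<in> insert f (x \<inter> y)" "leq A e' e0"
      show "e' \<in> insert f (x \<inter> y)"
      proof (cases "e0 = f")
        case True
        then have "e' \<in> y" using config_down[OF g less.prems(4)] a f(1) by blast
        then show ?thesis using f(2) a(2) True by blast
      next
        case False
        then have "e0 \<in> x \<inter> y" using a by blast
        then show ?thesis using config_down[OF g less.prems(3)] config_down[OF g less.prems(4)] a(2) by blast
      qed
    next
      fix X assume "X \<subseteq> insert f (x \<inter> y)" "finite X"
      then show "X \<in> con A" using config_con[OF less.prems(4)] f(1) by blast
    qed
    have cx: "config A (insert f x)"
      using cfg_add_neg[OF g rf nc less.prems(1) cu less.prems(3) _ cfu] f(1) less.prems(5) by blast
    have lt: "card (y - insert f x) < card (y - x)"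
    proof -
      have "y - insert f x = (y - x) - {f}" by blast
      then show ?thesis using f(1) less.prems(2) by (metis card_Diff1_less finite_Diff)
    qed
    have "config A (insert f x \<union> y)"
      by (rule less.hyps[OF lt _ less.prems(2) cx less.prems(4)]) (use less.prems in auto)
    moreover have "insert f x \<union> y = x \<union> y" using f(1) by blast
    ultimately show ?thesis by simp
  qed
qed

lemma cfg_union_family:
  assumes g: "is_game A" and rf: "race_free A" and nc: "no_neg_conflict A"
  shows "finite F \<Longrightarrow> \<forall>y\<in>F. finite y \<and> config A y \<Longrightarrow> config A p \<Longrightarrow> finite p
    \<Longrightarrow> \<forall>y\<in>F. \<forall>a\<in>y. pol A a \<longrightarrow> a \<in> p \<Longrightarrow> config A (p \<union> \<Union>F) \<and> finite (p \<union> \<Union>F)"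
proof (induction F rule: finite_induct)
  case empty then show ?case by simp
next
  case (insert y F)
  then have ih: "config A (p \<union> \<Union>F)" "finite (p \<union> \<Union>F)" by auto
  have "config A ((p \<union> \<Union>F) \<union> y)"
    by (rule cfg_union_neg[OF g rf nc ih(2) _ ih(1)]) (use insert.prems in auto)
  moreover have "(p \<union> \<Union>F) \<union> y = p \<union> \<Union>(insert y F)" by blast
  ultimately show ?case using ih(2) insert.prems by auto
qed




lemma qbase_sub: "qbase A x y1 y2 \<chi> \<subseteq> qset x y1 y2 \<times> qset x y1 y2"
  unfolding qbase_def by auto

lemma qset_evs: "x \<subseteq> evs A \<Longrightarrow> y1 \<subseteq> evs A \<Longrightarrow> y2 \<subseteq> evs A \<Longrightarrow> p \<in> qset x y1 y2 \<Longrightarrow> snd p \<in> evs A"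
  unfolding qset_def by auto

lemma qbase_leq:
  assumes g: "is_game A" and s: "x \<subseteq> evs A" "y1 \<subseteq> evs A" "y2 \<subseteq> evs A"
    and p: "(p, p') \<in> qbase A x y1 y2 \<chi>"
  shows "leq A (snd p) (snd p')"
proof -
  have "p' \<in> qset x y1 y2" using p qbase_sub by blast
  then have ev: "snd p' \<in> evs A" using qset_evs[OF s] by blast
  from p have "(fst p = fst p' \<and> leq A (snd p) (snd p')) \<or> snd p = snd p'"
    unfolding qbase_def by auto
  then show ?thesis using g_refl[OF g ev] by auto
qed

lemma qtrancl_leq:
  assumes g: "is_game A" and s: "x \<subseteq> evs A" "y1 \<subseteq> evs A" "y2 \<subseteq> evs A"
    and p: "(p, p') \<in> (qbase A x y1 y2 \<chi>)\<^sup>+"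
  shows "leq A (snd p) (snd p')"
  using p
proof (induction rule: trancl_induct)
  case (base y) then show ?case using qbase_leq[OF g s] by blast
next
  case (step y z) then show ?case using qbase_leq[OF g s] g_trans[OF g] by blast
qed

lemma qbase_same:
  assumes p: "(p, p') \<in> qbase A x y1 y2 \<chi>" and "snd p = snd p'"
  shows "(\<not> pol A (snd p') \<longrightarrow> fst p' = 0 \<or> fst p = fst p') \<and> (pol A (snd p') \<longrightarrow> fst p = 0 \<or> fst p = fst p')"
  using assms unfolding qbase_def by auto

lemma qtrancl_same:
  assumes g: "is_game A" and s: "x \<subseteq> evs A" "y1 \<subseteq> evs A" "y2 \<subseteq> evs A"
    and p: "(p, p') \<in> (qbase A x y1 y2 \<chi>)\<^sup>+"
  shows "snd p = snd p' \<longrightarrow> (\<not> pol A (snd p') \<longrightarrow> fst p' = 0 \<or> fst p = fst p') \<and> (pol A (snd p') \<longrightarrow> fst p = 0 \<or> fst p = fst p')"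
  using p
proof (induction rule: trancl_induct)
  case (base y) then show ?case using qbase_same by blast
next
  case (step y z)
  show ?case
  proof
    assume e: "snd p = snd z"
    have "leq A (snd p) (snd y)" using qtrancl_leq[OF g s step.hyps(1)] .
    moreover have "leq A (snd y) (snd z)" using qbase_leq[OF g s step.hyps(2)] .
    ultimately have e2: "snd y = snd z" using e g_antisym[OF g] by metis
    then have ih: "(\<not> pol A (snd y) \<longrightarrow> fst y = 0 \<or> fst p = fst y) \<and> (pol A (snd y) \<longrightarrow> fst p = 0 \<or> fst p = fst y)"
      using step.IH e by simp
    have st: "(\<not> pol A (snd z) \<longrightarrow> fst z = 0 \<or> fst y = fst z) \<and> (pol A (snd z) \<longrightarrow> fst y = 0 \<or> fst y = fst z)"
      using qbase_same[OF step.hyps(2) e2] .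
    show "(\<not> pol A (snd z) \<longrightarrow> fst z = 0 \<or> fst p = fst z) \<and> (pol A (snd z) \<longrightarrow> fst p = 0 \<or> fst p = fst z)"
      using ih st e2 by auto
  qed
qed

lemma qord_sub: "qord A x y1 y2 \<chi> \<subseteq> qset x y1 y2 \<times> qset x y1 y2"
proof -
  have "(qbase A x y1 y2 \<chi>)\<^sup>+ \<subseteq> qset x y1 y2 \<times> qset x y1 y2" by (rule trancl_subset_Sigma[OF qbase_sub])
  moreover have "Id_on (qset x y1 y2) \<subseteq> qset x y1 y2 \<times> qset x y1 y2" by (auto simp: Id_on_def)
  ultimately show ?thesis unfolding qord_def by blast
qed

lemma qord_trans: "(a, b) \<in> qord A x y1 y2 \<chi> \<Longrightarrow> (b, c) \<in> qord A x y1 y2 \<chi> \<Longrightarrow> (a, c) \<in> qord A x y1 y2 \<chi>"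
  unfolding qord_def by (auto simp: Id_on_def intro: trancl_trans)

lemma qord_refl: "a \<in> qset x y1 y2 \<Longrightarrow> (a, a) \<in> qord A x y1 y2 \<chi>"
  unfolding qord_def by auto

lemma qbase_qord: "(a, b) \<in> qbase A x y1 y2 \<chi> \<Longrightarrow> (a, b) \<in> qord A x y1 y2 \<chi>"
  unfolding qord_def by auto

lemma qord_antisym:
  assumes g: "is_game A" and s: "x \<subseteq> evs A" "y1 \<subseteq> evs A" "y2 \<subseteq> evs A"
    and "(a, b) \<in> qord A x y1 y2 \<chi>" "(b, a) \<in> qord A x y1 y2 \<chi>"
  shows "a = b"
proof (rule ccontr)
  assume ne: "a \<noteq> b"
  then have ab: "(a, b) \<in> (qbase A x y1 y2 \<chi>)\<^sup>+" "(b, a) \<in> (qbase A x y1 y2 \<chi>)\<^sup>+"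
    using assms(5,6) unfolding qord_def by (auto simp: Id_on_def)
  have e: "snd a = snd b" using qtrancl_leq[OF g s ab(1)] qtrancl_leq[OF g s ab(2)] g_antisym[OF g] by blast
  have 1: "(\<not> pol A (snd b) \<longrightarrow> fst b = 0 \<or> fst a = fst b) \<and> (pol A (snd b) \<longrightarrow> fst a = 0 \<or> fst a = fst b)"
    by (rule mp[OF qtrancl_same[OF g s ab(1)] e])
  have 2: "(\<not> pol A (snd a) \<longrightarrow> fst a = 0 \<or> fst b = fst a) \<and> (pol A (snd a) \<longrightarrow> fst b = 0 \<or> fst b = fst a)"
    by (rule mp[OF qtrancl_same[OF g s ab(2)] e[symmetric]])
  have "fst a = fst b" using 1 2 e by auto
  then show False using e ne by (simp add: prod_eq_iff)
qed

lemma delta_eq: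
  assumes g: "is_game A" and s: "x \<subseteq> evs A" "y1 \<subseteq> evs A" "y2 \<subseteq> evs A"
    and d: "d = (qset x y1 y2, qord A x y1 y2 \<chi>)" and t: "t \<in> fst d" "\<forall>s\<in>fst d. (s, t) \<in> snd d"
  shows "delta d = t"
  unfolding delta_def
proof (rule the_equality)
  show "t \<in> fst d \<and> (\<forall>s\<in>fst d. (s, t) \<in> snd d)" using t by blast
next
  fix t' assume "t' \<in> fst d \<and> (\<forall>s\<in>fst d. (s, t') \<in> snd d)"
  then have "(t, t') \<in> qord A x y1 y2 \<chi>" "(t', t) \<in> qord A x y1 y2 \<chi>" using t d by auto
  then show "t' = t" using qord_antisym[OF g s] by blast
qed




definition cmp :: "nat \<Rightarrow> (nat \<times> 'a) set \<Rightarrow> 'a set" where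
  "cmp i S = {a. (i, a) \<in> S}"

lemma cmp_qset: "cmp 0 (qset x y1 y2) = x" "cmp 1 (qset x y1 y2) = y1" "cmp 2 (qset x y1 y2) = y2"
   "cmp (Suc 0) (qset x y1 y2) = y1"
  unfolding cmp_def qset_def by auto

lemma DevE:
  assumes "d \<in> D_ev A"
  obtains x y1 y2 \<chi> where "balanced A x y1 y2" "choice A x y1 y2 \<chi>"
    "d = (qset x y1 y2, qord A x y1 y2 \<chi>)" "has_top d"
  using assms unfolding D_ev_def by blast

lemma bal_D: assumes "balanced A x y1 y2" shows
  "finite x" "finite y1" "finite y2" "config A x" "config A y1" "config A y2"
  "\<forall>a\<in>y1 \<union> y2. pol A a \<longrightarrow> a \<in> x" "\<forall>a\<in>x. \<not> pol A a \<longrightarrow> a \<in> y1 \<or> a \<in> y2"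
  using assms[unfolded balanced_def] by simp_all

lemma bal_evs: "balanced A x y1 y2 \<Longrightarrow> x \<subseteq> evs A \<and> y1 \<subseteq> evs A \<and> y2 \<subseteq> evs A"
  using bal_D(4,5,6) config_sub_evs by metis

lemma Dev_delta:
  assumes g: "is_game A" and d: "d \<in> D_ev A"
  shows "delta d \<in> fst d \<and> (\<forall>s\<in>fst d. (s, delta d) \<in> snd d)"
proof -
  obtain x y1 y2 \<chi> where b: "balanced A x y1 y2" "choice A x y1 y2 \<chi>"
    "d = (qset x y1 y2, qord A x y1 y2 \<chi>)" "has_top d" by (rule DevE[OF d])
  obtain t where t: "t \<in> fst d" "\<forall>s\<in>fst d. (s, t) \<in> snd d" using b(4) unfolding has_top_def by blast
  have s: "x \<subseteq> evs A" "y1 \<subseteq> evs A" "y2 \<subseteq> evs A" using bal_evs[OF b(1)] by auto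
  have "delta d = t" by (rule delta_eq[OF g s b(3) t])
  then show ?thesis using t by simp
qed

lemma Dev_le_refl: assumes d: "d \<in> D_ev A" shows "D_le d d"
proof -
  obtain x y1 y2 \<chi> where b: "d = (qset x y1 y2, qord A x y1 y2 \<chi>)" by (rule DevE[OF d])
  have "qord A x y1 y2 \<chi> \<subseteq> qset x y1 y2 \<times> qset x y1 y2" by (rule qord_sub)
  then show ?thesis unfolding D_le_def b by auto
qed

lemma Dev_comp:
  assumes d: "d \<in> D_ev A"
  shows "i \<in> {0,1,2} \<Longrightarrow> config A (cmp i (fst d)) \<and> finite (cmp i (fst d))"
    and "fst d \<subseteq> {0,1,2} \<times> evs A" and "finite (fst d)"
    and "i \<in> {1,2} \<Longrightarrow> a \<in> cmp i (fst d) \<Longrightarrow> pol A a \<Longrightarrow> a \<in> cmp 0 (fst d)"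
proof -
  obtain x y1 y2 \<chi> where b: "balanced A x y1 y2" "d = (qset x y1 y2, qord A x y1 y2 \<chi>)" by (rule DevE[OF d])
  note bb = bal_D[OF b(1)]
  show "i \<in> {0,1,2} \<Longrightarrow> config A (cmp i (fst d)) \<and> finite (cmp i (fst d))"
    using bb b(2) by (auto simp: cmp_qset)
  show "fst d \<subseteq> {0,1,2} \<times> evs A" using b(2) bal_evs[OF b(1)] unfolding qset_def by auto
  show "finite (fst d)" using b(2) bb unfolding qset_def by auto
  show "i \<in> {1,2} \<Longrightarrow> a \<in> cmp i (fst d) \<Longrightarrow> pol A a \<Longrightarrow> a \<in> cmp 0 (fst d)"
    using b(2) bb(7) by (auto simp: cmp_qset)
qed

lemma trancl_restrict:
  assumes "(a, b) \<in> R\<^sup>+" "b \<in> S" "\<forall>u v. (u, v) \<in> R \<longrightarrow> v \<in> S \<longrightarrow> u \<in> S"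
  shows "(a, b) \<in> (R \<inter> S \<times> S)\<^sup>+"
  using assms
proof (induction rule: trancl_induct)
  case (base y) then show ?case by blast
next
  case (step y z)
  then have "y \<in> S" by blast
  then have "(a, y) \<in> (R \<inter> S \<times> S)\<^sup>+" "(y, z) \<in> R \<inter> S \<times> S" using step by auto
  then show ?case by (rule trancl_into_trancl)
qed

lemma cfg_sub_down:
  assumes g: "is_game A" and "config A z" "z' \<subseteq> z" "\<forall>a b. a \<in> z' \<longrightarrow> leq A b a \<longrightarrow> b \<in> z \<longrightarrow> b \<in> z'"
  shows "config A z'"
proof (rule configI)
  show "z' \<subseteq> evs A" using assms(3) config_sub_evs[OF assms(2)] by blast
next
  fix e e' assume "e \<in> z'" "leq A e' e"
  then show "e' \<in> z'" using assms(3,4) config_down[OF g assms(2)] by blast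
next
  fix X assume "X \<subseteq> z'" "finite X"
  then show "X \<in> con A" using assms(3) config_con[OF assms(2)] by blast
qed




lemma Dev_restrict:
  assumes g: "is_game A" and d: "d \<in> D_ev A" and t: "t \<in> fst d"
  shows "\<exists>d'\<in>D_ev A. D_le d' d \<and> delta d' = t"
proof -
  obtain x y1 y2 \<chi> where b: "balanced A x y1 y2" "choice A x y1 y2 \<chi>"
    "d = (qset x y1 y2, qord A x y1 y2 \<chi>)" by (rule DevE[OF d])
  note bb = bal_D[OF b(1)]
  have s: "x \<subseteq> evs A" "y1 \<subseteq> evs A" "y2 \<subseteq> evs A" using bal_evs[OF b(1)] by auto
  define Q where "Q = qset x y1 y2"
  define Ord where "Ord = qord A x y1 y2 \<chi>"
  define R where "R = qbase A x y1 y2 \<chi>"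
  define S where "S = {s \<in> Q. (s, t) \<in> Ord}"
  define x' where "x' = {a. (0, a) \<in> S}"
  define y1' where "y1' = {a. (1, a) \<in> S}"
  define y2' where "y2' = {a. (2, a) \<in> S}"
  have tQ: "t \<in> Q" using t b(3) Q_def by simp
  have SQ: "S \<subseteq> Q" using S_def by blast
  have Osub: "Ord \<subseteq> Q \<times> Q" unfolding Ord_def Q_def by (rule qord_sub)
  have RO: "\<And>u v. (u, v) \<in> R \<Longrightarrow> (u, v) \<in> Ord" unfolding R_def Ord_def by (rule qbase_qord)
  have Sdown: "\<And>u v. (u, v) \<in> Ord \<Longrightarrow> v \<in> S \<Longrightarrow> u \<in> S"
    using Osub qord_trans[of _ _ A x y1 y2 \<chi>] unfolding S_def Ord_def by blast
  have RS: "\<And>u v. (u, v) \<in> R \<Longrightarrow> v \<in> S \<Longrightarrow> u \<in> S" using RO Sdown by blast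
  have qS: "qset x' y1' y2' = S"
  proof -
    have "\<And>p. p \<in> Q \<Longrightarrow> fst p = 0 \<or> fst p = 1 \<or> fst p = 2" unfolding Q_def qset_def by auto
    then show ?thesis using SQ unfolding qset_def x'_def y1'_def y2'_def by force
  qed
  have x'x: "x' \<subseteq> x" and y1'y: "y1' \<subseteq> y1" and y2'y: "y2' \<subseteq> y2"
    using SQ unfolding x'_def y1'_def y2'_def Q_def qset_def by auto
  have Rin: "\<And>u v. u \<in> Q \<Longrightarrow> v \<in> Q \<Longrightarrow> fst u = fst v \<Longrightarrow> leq A (snd u) (snd v) \<Longrightarrow> (u, v) \<in> R"
    unfolding R_def Q_def qbase_def by auto
  have cx: "config A x'"
  proof (rule cfg_sub_down[OF g bb(4) x'x], intro allI impI)
    fix a c assume "a \<in> x'" "leq A c a" "c \<in> x"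
    then have "((0, c), (0, a)) \<in> R" using Rin SQ unfolding x'_def Q_def qset_def by auto
    then show "c \<in> x'" using RS \<open>a \<in> x'\<close> unfolding x'_def by blast
  qed
  have cy1: "config A y1'"
  proof (rule cfg_sub_down[OF g bb(5) y1'y], intro allI impI)
    fix a c assume "a \<in> y1'" "leq A c a" "c \<in> y1"
    then have "((1, c), (1, a)) \<in> R" using Rin SQ unfolding y1'_def Q_def qset_def by auto
    then show "c \<in> y1'" using RS \<open>a \<in> y1'\<close> unfolding y1'_def by blast
  qed
  have cy2: "config A y2'"
  proof (rule cfg_sub_down[OF g bb(6) y2'y], intro allI impI)
    fix a c assume "a \<in> y2'" "leq A c a" "c \<in> y2"
    then have "((2, c), (2, a)) \<in> R" using Rin SQ unfolding y2'_def Q_def qset_def by auto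
    then show "c \<in> y2'" using RS \<open>a \<in> y2'\<close> unfolding y2'_def by blast
  qed
  have chi: "\<And>a. a \<in> x \<Longrightarrow> \<not> pol A a \<Longrightarrow> ((\<chi> a, a), (0, a)) \<in> R \<and> (\<chi> a = 1 \<and> a \<in> y1 \<or> \<chi> a = 2 \<and> a \<in> y2)"
  proof -
    fix a assume a: "a \<in> x" "\<not> pol A a"
    then have c: "\<chi> a = 1 \<and> a \<in> y1 \<or> \<chi> a = 2 \<and> a \<in> y2" using b(2) unfolding choice_def by blast
    then have "(\<chi> a, a) \<in> Q" "(0, a) \<in> Q" using a unfolding Q_def qset_def by auto
    then have "((\<chi> a, a), (0, a)) \<in> R" using a unfolding R_def qbase_def Q_def by auto
    then show "((\<chi> a, a), (0, a)) \<in> R \<and> (\<chi> a = 1 \<and> a \<in> y1 \<or> \<chi> a = 2 \<and> a \<in> y2)" using c by blast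
  qed
  have ch': "choice A x' y1' y2' \<chi>"
    unfolding choice_def
  proof (intro ballI impI)
    fix a assume a: "a \<in> x'" "\<not> pol A a"
    then have "a \<in> x" using x'x by blast
    from chi[OF this a(2)] have "(\<chi> a, a) \<in> S" "\<chi> a = 1 \<or> \<chi> a = 2" using RS a(1) unfolding x'_def by blast+
    then show "\<chi> a = 1 \<and> a \<in> y1' \<or> \<chi> a = 2 \<and> a \<in> y2'" unfolding y1'_def y2'_def by auto
  qed
  have bal': "balanced A x' y1' y2'"
    unfolding balanced_def
  proof (intro conjI ballI impI)
    show "finite x'" using finite_subset[OF x'x bb(1)] .
    show "finite y1'" using finite_subset[OF y1'y bb(2)] .
    show "finite y2'" using finite_subset[OF y2'y bb(3)] .
    show "config A x'" "config A y1'" "config A y2'" by fact+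
  next
    fix a assume a: "a \<in> y1' \<union> y2'" "pol A a"
    then have ax: "a \<in> x" using bb(7) y1'y y2'y by blast
    show "a \<in> x'"
    proof (cases "a \<in> y1'")
      case True
      then have "((0, a), (1, a)) \<in> R" using ax a(2) y1'y unfolding R_def qbase_def qset_def by auto
      then show ?thesis using RS True unfolding x'_def y1'_def by blast
    next
      case False
      then have a2: "a \<in> y2'" using a by blast
      then have "((0, a), (2, a)) \<in> R" using ax a(2) y2'y unfolding R_def qbase_def qset_def by auto
      then show ?thesis using RS a2 unfolding x'_def y2'_def by blast
    qed
  next
    fix a assume a: "a \<in> x'" "\<not> pol A a"
    then show "a \<in> y1' \<or> a \<in> y2'" using ch' unfolding choice_def by blast
  qed
  have Rres: "qbase A x' y1' y2' \<chi> = R \<inter> S \<times> S"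
  proof -
    have "\<And>a. a \<in> y1' \<Longrightarrow> a \<in> y1" "\<And>a. a \<in> y2' \<Longrightarrow> a \<in> y2" "\<And>a. a \<in> x' \<Longrightarrow> a \<in> x"
      using x'x y1'y y2'y by blast+
    moreover have "\<And>a. (1, a) \<in> S \<Longrightarrow> a \<in> y1'" "\<And>a. (2, a) \<in> S \<Longrightarrow> a \<in> y2'" "\<And>a. (0, a) \<in> S \<Longrightarrow> a \<in> x'"
      unfolding x'_def y1'_def y2'_def by auto
    ultimately show ?thesis unfolding qbase_def R_def qS using SQ unfolding Q_def by auto
  qed
  have Ores: "qord A x' y1' y2' \<chi> = Ord \<inter> S \<times> S"
  proof -
    have "(R \<inter> S \<times> S)\<^sup>+ = R\<^sup>+ \<inter> S \<times> S"
    proof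
      show "(R \<inter> S \<times> S)\<^sup>+ \<subseteq> R\<^sup>+ \<inter> S \<times> S"
        using trancl_mono[of _ "R \<inter> S \<times> S" R] trancl_subset_Sigma[of "R \<inter> S \<times> S" S] by blast
      show "R\<^sup>+ \<inter> S \<times> S \<subseteq> (R \<inter> S \<times> S)\<^sup>+"
        using trancl_restrict[of _ _ R S] RS by blast
    qed
    moreover have "Id_on S = Id_on Q \<inter> S \<times> S" using SQ by (auto simp: Id_on_def)
    ultimately show ?thesis unfolding qord_def qS Ord_def Rres R_def Q_def by blast
  qed
  define d' where "d' = (S, Ord \<inter> S \<times> S)"
  have tS: "t \<in> S" using tQ qord_refl[of t x y1 y2 A \<chi>] unfolding S_def Ord_def Q_def by blast
  have top: "\<forall>s\<in>S. (s, t) \<in> Ord \<inter> S \<times> S" using tS unfolding S_def by blast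
  have d'eq: "d' = (qset x' y1' y2', qord A x' y1' y2' \<chi>)" unfolding d'_def qS Ores ..
  have "has_top d'" unfolding has_top_def d'_def using tS top by auto
  then have inD: "d' \<in> D_ev A" unfolding D_ev_def using bal' ch' d'eq by blast
  have le: "D_le d' d" unfolding D_le_def d'_def b(3) using SQ Sdown
    unfolding Q_def Ord_def by auto
  have s': "x' \<subseteq> evs A" "y1' \<subseteq> evs A" "y2' \<subseteq> evs A" using s x'x y1'y y2'y by auto
  have "delta d' = t" by (rule delta_eq[OF g s' d'eq]) (use tS top d'_def in auto)
  then show ?thesis using inD le by blast
qed




lemma con_downclose:
  assumes g: "is_game A" and P: "P \<in> con A"
  shows "{e. \<exists>f\<in>P. leq A e f} \<in> con A" and "config A {e. \<exists>f\<in>P. leq A e f}"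
proof -
  define p where "p = {e. \<exists>f\<in>P. leq A e f}"
  have fP: "finite P" "P \<subseteq> evs A" using g_con_fin[OF g P] by auto
  have "p \<subseteq> (\<Union>f\<in>P. {e. leq A e f})" unfolding p_def by blast
  moreover have "finite (\<Union>f\<in>P. {e. leq A e f})" using fP g_fin_down[OF g] by blast
  ultimately have fp: "finite p" by (rule finite_subset)
  have ind: "finite S \<Longrightarrow> S \<subseteq> p \<Longrightarrow> S \<union> P \<in> con A" for S
  proof (induction S rule: finite_induct)
    case empty then show ?case using P by simp
  next
    case (insert e S)
    then obtain f where f: "f \<in> P" "leq A e f" unfolding p_def by blast
    have "insert e (S \<union> P) \<in> con A"
      by (rule g_con_down[OF g _ _ f(2)]) (use insert f in auto)
    then show ?case by simp
  qed
  have "p \<union> P \<in> con A" using ind[OF fp] by simp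
  then have pc: "p \<in> con A" using g_con_sub[OF g] by blast
  then show "{e. \<exists>f\<in>P. leq A e f} \<in> con A" unfolding p_def .
  have "config A p"
  proof (rule configI)
    show "p \<subseteq> evs A" unfolding p_def using g_leq_evs[OF g] by blast
  next
    fix e e' assume "e \<in> p" "leq A e' e"
    then show "e' \<in> p" unfolding p_def using g_trans[OF g] by blast
  next
    fix X assume "X \<subseteq> p" "finite X"
    then show "X \<in> con A" using g_con_sub[OF g pc] by blast
  qed
  then show "config A {e. \<exists>f\<in>P. leq A e f}" unfolding p_def .
qed

lemma Ddown_delta:
  assumes g: "is_game A" and "d \<in> D_down A X"
  shows "\<exists>d'\<in>X. delta d \<in> fst d' \<and> fst d \<subseteq> fst d'"
proof -
  from assms(2) obtain d' where d: "d \<in> D_ev A" "d' \<in> X" "D_le d d'" unfolding D_down_def by blast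
  have "delta d \<in> fst d" using Dev_delta[OF g d(1)] by blast
  then show ?thesis using d(2,3) unfolding D_le_def by blast
qed

lemma det_of_nc:
  assumes g: "is_game A" and rf: "race_free A" and nc: "no_neg_conflict A"
  shows "D_deterministic A"
  unfolding D_deterministic_def
proof (intro allI impI)
  fix X assume X: "finite X \<and> X \<subseteq> D_ev A"
  define Y where "Y = {d \<in> D_down A X. \<not> D_pol A d}"
  assume "D_con A {d \<in> D_down A X. \<not> D_pol A d}"
  then have pc: "par_con A (delta ` D_down A Y)" unfolding D_con_def Y_def by blast
  define U where "U i = (\<Union>d\<in>X. cmp i (fst d))" for i
  define P where "P = {a \<in> U 0. pol A a}"
  have "P \<subseteq> cmp 0 (delta ` D_down A Y)"
  proof
    fix a assume "a \<in> P"
    then obtain d' where d': "d' \<in> X" "(0, a) \<in> fst d'" "pol A a" unfolding P_def U_def cmp_def by blast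
    obtain d'' where d'': "d'' \<in> D_ev A" "D_le d'' d'" "delta d'' = (0, a)"
      using Dev_restrict[OF g _ d'(2)] d'(1) X by blast
    have "d'' \<in> D_down A X" unfolding D_down_def using d'' d'(1) by blast
    moreover have "\<not> D_pol A d''" unfolding D_pol_def par_pol_def using d''(3) d'(3) by simp
    ultimately have "d'' \<in> Y" unfolding Y_def by blast
    then have "d'' \<in> D_down A Y" unfolding D_down_def using d''(1) Dev_le_refl[OF d''(1)] by blast
    then show "a \<in> cmp 0 (delta ` D_down A Y)" unfolding cmp_def using d''(3) by force
  qed
  moreover have "cmp 0 (delta ` D_down A Y) \<in> con A" using pc unfolding par_con_def cmp_def by blast
  ultimately have Pc: "P \<in> con A" using g_con_sub[OF g] by blast
  define p where "p = {e. \<exists>f\<in>P. leq A e f}"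
  have cp: "config A p" "p \<in> con A" unfolding p_def using con_downclose[OF g Pc] by auto
  have fp: "finite p" using g_con_fin[OF g cp(2)] by blast
  have comp: "\<And>d i. d \<in> X \<Longrightarrow> i \<in> {0,1,2} \<Longrightarrow> config A (cmp i (fst d)) \<and> finite (cmp i (fst d))"
    using Dev_comp(1) X by blast
  have c0: "config A (p \<union> U 0) \<and> finite (p \<union> U 0)"
  proof -
    have "config A (p \<union> \<Union>((\<lambda>d. cmp 0 (fst d)) ` X)) \<and> finite (p \<union> \<Union>((\<lambda>d. cmp 0 (fst d)) ` X))"
    proof (rule cfg_union_family[OF g rf nc _ _ cp(1) fp])
      show "finite ((\<lambda>d. cmp 0 (fst d)) ` X)" using X by blast
      show "\<forall>y\<in>(\<lambda>d. cmp 0 (fst d)) ` X. finite y \<and> config A y" using comp by blast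
      show "\<forall>y\<in>(\<lambda>d. cmp 0 (fst d)) ` X. \<forall>a\<in>y. pol A a \<longrightarrow> a \<in> p"
      proof (intro ballI impI)
        fix y a assume "y \<in> (\<lambda>d. cmp 0 (fst d)) ` X" "a \<in> y" "pol A a"
        then have aP: "a \<in> P" unfolding P_def U_def by blast
        then have "a \<in> evs A" using g_con_fin[OF g Pc] by blast
        then show "a \<in> p" unfolding p_def using aP g_refl[OF g] by blast
      qed
    qed
    then show ?thesis unfolding U_def by simp
  qed
  have step: "config A (q \<union> U i) \<and> finite (q \<union> U i)" if "config A q" "finite q" "U 0 \<subseteq> q" "i \<in> {1,2}" for q i
  proof -
    have "config A (q \<union> \<Union>((\<lambda>d. cmp i (fst d)) ` X)) \<and> finite (q \<union> \<Union>((\<lambda>d. cmp i (fst d)) ` X))"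
    proof (rule cfg_union_family[OF g rf nc _ _ that(1,2)])
      show "finite ((\<lambda>d. cmp i (fst d)) ` X)" using X by blast
      show "\<forall>y\<in>(\<lambda>d. cmp i (fst d)) ` X. finite y \<and> config A y" using comp that(4) by blast
      show "\<forall>y\<in>(\<lambda>d. cmp i (fst d)) ` X. \<forall>a\<in>y. pol A a \<longrightarrow> a \<in> q"
      proof (intro ballI impI)
        fix y a assume "y \<in> (\<lambda>d. cmp i (fst d)) ` X" "a \<in> y" "pol A a"
        then obtain d where "d \<in> X" "a \<in> cmp i (fst d)" "pol A a" by blast
        then have "a \<in> cmp 0 (fst d)" using Dev_comp(4)[of d A i a] X that(4) by blast
        then show "a \<in> q" using \<open>d \<in> X\<close> that(3) unfolding U_def by blast
      qed
    qed
    then show ?thesis unfolding U_def by simp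
  qed
  have c1: "config A ((p \<union> U 0) \<union> U 1) \<and> finite ((p \<union> U 0) \<union> U 1)"
    using step[of "p \<union> U 0" 1] c0 by blast
  have c2: "config A ((p \<union> U 0 \<union> U 1) \<union> U 2) \<and> finite ((p \<union> U 0 \<union> U 1) \<union> U 2)"
    using step[of "p \<union> U 0 \<union> U 1" 2] c1 by blast
  define C where "C = p \<union> U 0 \<union> U 1 \<union> U 2"
  have cC: "config A C" "finite C" using c2 unfolding C_def by auto
  define Z where "Z = delta ` D_down A X"
  have Zsub: "Z \<subseteq> (\<Union>d\<in>X. fst d)" unfolding Z_def using Ddown_delta[OF g] by blast
  have fZ: "finite Z" using Zsub X Dev_comp(3) by (meson finite_UN_I finite_subset subsetD)
  have Zev: "Z \<subseteq> par_evs A" using Zsub X Dev_comp(2) unfolding par_evs_def by blast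
  have Zc: "\<forall>i\<in>{0,1,2}. {a. (i, a) \<in> Z} \<in> con A"
  proof
    fix i :: nat assume i: "i \<in> {0,1,2}"
    have "{a. (i, a) \<in> Z} \<subseteq> U i" using Zsub unfolding U_def cmp_def by blast
    moreover have "U i \<subseteq> C" using i unfolding C_def by auto
    ultimately have "{a. (i, a) \<in> Z} \<subseteq> C" by blast
    then show "{a. (i, a) \<in> Z} \<in> con A" using config_con[OF cC(1)] finite_subset[OF _ cC(2)] by blast
  qed
  show "D_con A X" unfolding D_con_def par_con_def using X fZ Zev Zc unfolding Z_def by blast
qed




definition dn :: "'a game \<Rightarrow> 'a \<Rightarrow> 'a set" where "dn A e = {f. leq A f e}"
definition NN :: "'a game \<Rightarrow> 'a \<Rightarrow> 'a set" where
  "NN A e = {f. \<exists>b. \<not> pol A b \<and> leq A b e \<and> leq A f b}"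

lemma dn_props:
  assumes g: "is_game A" and c: "config A c" and e: "e \<in> c"
  shows "config A (dn A e)" "finite (dn A e)" "dn A e \<subseteq> c" "config A (NN A e)" "finite (NN A e)"
    "NN A e \<subseteq> dn A e" "config A {}"
proof -
  have ee: "e \<in> evs A" using config_sub_evs[OF c] e by blast
  show dc: "dn A e \<subseteq> c" unfolding dn_def using config_down[OF g c e] by blast
  show fd: "finite (dn A e)" unfolding dn_def using g_fin_down[OF g ee] .
  show cd: "config A (dn A e)"
  proof (rule configI)
    show "dn A e \<subseteq> evs A" unfolding dn_def using g_leq_evs[OF g] by blast
  next
    fix a b assume "a \<in> dn A e" "leq A b a"
    then show "b \<in> dn A e" unfolding dn_def using g_trans[OF g] by blast
  next
    fix X assume "X \<subseteq> dn A e" "finite X"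
    then show "X \<in> con A" using dc config_con[OF c] by blast
  qed
  show nd: "NN A e \<subseteq> dn A e" unfolding NN_def dn_def using g_trans[OF g] by blast
  show "finite (NN A e)" using finite_subset[OF nd fd] .
  show "config A (NN A e)"
  proof (rule cfg_sub_down[OF g cd nd], intro allI impI)
    fix a b assume "a \<in> NN A e" "leq A b a"
    then show "b \<in> NN A e" unfolding NN_def using g_trans[OF g] by blast
  qed
  show "config A {}"
  proof (rule configI)
    fix X :: "'a set" assume "X \<subseteq> {}" "finite X"
    then show "X \<in> con A" using config_con[OF c, of "{}"] by simp
  qed auto
qed

definition E1 :: "'a game \<Rightarrow> 'a \<Rightarrow> 'a dev" where
  "E1 A e = (qset (dn A e) (NN A e) {}, qord A (dn A e) (NN A e) {} (\<lambda>_. 1))"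
definition E2 :: "'a game \<Rightarrow> 'a \<Rightarrow> 'a dev" where
  "E2 A e = (qset (dn A e) {} (NN A e), qord A (dn A e) {} (NN A e) (\<lambda>_. 2))"

lemma E1_props:
  assumes g: "is_game A" and c: "config A c" and e: "e \<in> c"
  shows "E1 A e \<in> D_ev A" "delta (E1 A e) = (0, e)"
proof -
  note dp = dn_props[OF g c e]
  have ee: "e \<in> evs A" using config_sub_evs[OF c] e by blast
  have bal: "balanced A (dn A e) (NN A e) {}"
    unfolding balanced_def
  proof (intro conjI ballI impI)
    show "finite (dn A e)" "finite (NN A e)" "finite {}" "config A (dn A e)" "config A (NN A e)" "config A {}"
      using dp by auto
  next
    fix a assume "a \<in> NN A e \<union> {}" "pol A a" then show "a \<in> dn A e" using dp(6) by blast
  next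
    fix a assume a: "a \<in> dn A e" "\<not> pol A a"
    then have "a \<in> evs A" unfolding dn_def using g_leq_evs[OF g] by blast
    then show "a \<in> NN A e \<or> a \<in> {}" using a g_refl[OF g] unfolding NN_def dn_def by blast
  qed
  have ch: "choice A (dn A e) (NN A e) {} (\<lambda>_. 1)"
    using bal unfolding choice_def balanced_def by blast
  have s: "dn A e \<subseteq> evs A" "NN A e \<subseteq> evs A" "{} \<subseteq> evs A" using config_sub_evs[OF dp(1)] config_sub_evs[OF dp(4)] by auto
  let ?Q = "qset (dn A e) (NN A e) {}"
  let ?O = "qord A (dn A e) (NN A e) {} (\<lambda>_. 1)"
  have eQ: "(0, e) \<in> ?Q" unfolding qset_def dn_def using g_refl[OF g ee] by blast
  have top: "\<forall>s\<in>?Q. (s, (0, e)) \<in> ?O"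
  proof
    fix s assume "s \<in> ?Q"
    then consider f where "s = (0, f)" "f \<in> dn A e" | f where "s = (1, f)" "f \<in> NN A e"
      unfolding qset_def by blast
    then show "(s, (0, e)) \<in> ?O"
    proof cases
      case 1
      then have "(s, (0, e)) \<in> qbase A (dn A e) (NN A e) {} (\<lambda>_. 1)"
        using eQ unfolding qbase_def qset_def dn_def by auto
      then show ?thesis by (rule qbase_qord)
    next
      case 2
      then obtain b where b: "\<not> pol A b" "leq A b e" "leq A f b" unfolding NN_def by blast
      have bN: "b \<in> NN A e" unfolding NN_def using b g_refl[OF g] g_leq_evs[OF g b(2)] by blast
      have bD: "b \<in> dn A e" unfolding dn_def using b by blast
      have "((1, f), (1, b)) \<in> qbase A (dn A e) (NN A e) {} (\<lambda>_. 1)"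
        using 2 bN b unfolding qbase_def qset_def by auto
      moreover have "((1, b), (0, b)) \<in> qbase A (dn A e) (NN A e) {} (\<lambda>_. 1)"
        using bN bD b unfolding qbase_def qset_def by auto
      moreover have "((0, b), (0, e)) \<in> qbase A (dn A e) (NN A e) {} (\<lambda>_. 1)"
        using bD b eQ unfolding qbase_def qset_def by auto
      ultimately show ?thesis using 2 qbase_qord qord_trans by metis
    qed
  qed
  have ht: "has_top (E1 A e)" unfolding has_top_def E1_def using eQ top by auto
  have eq: "E1 A e = (qset (dn A e) (NN A e) {}, qord A (dn A e) (NN A e) {} (\<lambda>_. 1))" by (simp add: E1_def)
  show "E1 A e \<in> D_ev A" unfolding D_ev_def mem_Collect_eq by (intro exI conjI, rule bal, rule ch, rule eq, rule ht)
  show "delta (E1 A e) = (0, e)" by (rule delta_eq[OF g s eq]) (use eQ top eq in auto)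
qed

lemma E2_props:
  assumes g: "is_game A" and c: "config A c" and e: "e \<in> c"
  shows "E2 A e \<in> D_ev A" "delta (E2 A e) = (0, e)"
proof -
  note dp = dn_props[OF g c e]
  have ee: "e \<in> evs A" using config_sub_evs[OF c] e by blast
  have bal: "balanced A (dn A e) {} (NN A e)"
    unfolding balanced_def
  proof (intro conjI ballI impI)
    show "finite (dn A e)" "finite (NN A e)" "finite {}" "config A (dn A e)" "config A (NN A e)" "config A {}"
      using dp by auto
  next
    fix a assume "a \<in> {} \<union> NN A e" "pol A a" then show "a \<in> dn A e" using dp(6) by blast
  next
    fix a assume a: "a \<in> dn A e" "\<not> pol A a"
    then have "a \<in> evs A" unfolding dn_def using g_leq_evs[OF g] by blast
    then show "a \<in> {} \<or> a \<in> NN A e" using a g_refl[OF g] unfolding NN_def dn_def by blast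
  qed
  have ch: "choice A (dn A e) {} (NN A e) (\<lambda>_. 2)"
    using bal unfolding choice_def balanced_def by blast
  have s: "dn A e \<subseteq> evs A" "{} \<subseteq> evs A" "NN A e \<subseteq> evs A" using config_sub_evs[OF dp(1)] config_sub_evs[OF dp(4)] by auto
  let ?Q = "qset (dn A e) {} (NN A e)"
  let ?O = "qord A (dn A e) {} (NN A e) (\<lambda>_. 2)"
  have eQ: "(0, e) \<in> ?Q" unfolding qset_def dn_def using g_refl[OF g ee] by blast
  have top: "\<forall>s\<in>?Q. (s, (0, e)) \<in> ?O"
  proof
    fix s assume "s \<in> ?Q"
    then consider f where "s = (0, f)" "f \<in> dn A e" | f where "s = (2, f)" "f \<in> NN A e"
      unfolding qset_def by blast
    then show "(s, (0, e)) \<in> ?O"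
    proof cases
      case 1
      then have "(s, (0, e)) \<in> qbase A (dn A e) {} (NN A e) (\<lambda>_. 2)"
        using eQ unfolding qbase_def qset_def dn_def by auto
      then show ?thesis by (rule qbase_qord)
    next
      case 2
      then obtain b where b: "\<not> pol A b" "leq A b e" "leq A f b" unfolding NN_def by blast
      have bN: "b \<in> NN A e" unfolding NN_def using b g_refl[OF g] g_leq_evs[OF g b(2)] by blast
      have bD: "b \<in> dn A e" unfolding dn_def using b by blast
      have "((2, f), (2, b)) \<in> qbase A (dn A e) {} (NN A e) (\<lambda>_. 2)"
        using 2 bN b unfolding qbase_def qset_def by auto
      moreover have "((2, b), (0, b)) \<in> qbase A (dn A e) {} (NN A e) (\<lambda>_. 2)"
        using bN bD b unfolding qbase_def qset_def by auto
      moreover have "((0, b), (0, e)) \<in> qbase A (dn A e) {} (NN A e) (\<lambda>_. 2)"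
        using bD b eQ unfolding qbase_def qset_def by auto
      ultimately show ?thesis using 2 qbase_qord qord_trans by metis
    qed
  qed
  have ht: "has_top (E2 A e)" unfolding has_top_def E2_def using eQ top by auto
  have eq: "E2 A e = (qset (dn A e) {} (NN A e), qord A (dn A e) {} (NN A e) (\<lambda>_. 2))" by (simp add: E2_def)
  show "E2 A e \<in> D_ev A" unfolding D_ev_def mem_Collect_eq by (intro exI conjI, rule bal, rule ch, rule eq, rule ht)
  show "delta (E2 A e) = (0, e)" by (rule delta_eq[OF g s eq]) (use eQ top eq in auto)
qed




lemma Ddown_finite:
  assumes X: "finite X" "X \<subseteq> D_ev A"
  shows "finite (D_down A X)"
proof -
  let ?f = "\<lambda>(S, d'). (S, snd d' \<inter> S \<times> S)"
  have fU: "finite (\<Union>d\<in>X. fst d)" using X Dev_comp(3) by blast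
  have "D_down A X \<subseteq> ?f ` (Pow (\<Union>d\<in>X. fst d) \<times> X)"
  proof
    fix d assume "d \<in> D_down A X"
    then obtain d' where d': "d' \<in> X" "D_le d d'" unfolding D_down_def by blast
    then have "fst d \<subseteq> fst d'" "snd d = snd d' \<inter> fst d \<times> fst d" unfolding D_le_def by auto
    then have "d = ?f (fst d, d')" "(fst d, d') \<in> Pow (\<Union>d\<in>X. fst d) \<times> X" using d'(1)
      by (auto simp: prod_eq_iff)
    then show "d \<in> ?f ` (Pow (\<Union>d\<in>X. fst d) \<times> X)" by blast
  qed
  moreover have "finite (?f ` (Pow (\<Union>d\<in>X. fst d) \<times> X))" using fU X by simp
  ultimately show ?thesis by (rule finite_subset)
qed

lemma nc_of_det:
  assumes g: "is_game A" and det: "D_deterministic A"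
  shows "no_neg_conflict A"
  unfolding no_neg_conflict_def
proof (intro allI impI, rule ccontr)
  fix z a1 a2
  assume H: "config A z \<and> a1 \<notin> z \<and> a2 \<notin> z \<and> \<not> pol A a1 \<and> \<not> pol A a2 \<and>
    config A (insert a1 z) \<and> config A (insert a2 z)"
  assume nK: "\<not> config A (insert a1 (insert a2 z))"
  define c1 where "c1 = insert a1 z"
  define c2 where "c2 = insert a2 z"
  have cz: "config A z" and cc1: "config A c1" and cc2: "config A c2"
    and nz: "a1 \<notin> z" "a2 \<notin> z" and np: "\<not> pol A a1" "\<not> pol A a2"
    using H unfolding c1_def c2_def by auto
  define K where "K = insert a1 (insert a2 z)"
  have KU: "K = c1 \<union> c2" unfolding K_def c1_def c2_def by blast
  obtain W where W: "W \<subseteq> K" "finite W" "W \<notin> con A"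
  proof -
    have "\<not> (\<forall>W. W \<subseteq> K \<longrightarrow> finite W \<longrightarrow> W \<in> con A)"
    proof
      assume a: "\<forall>W. W \<subseteq> K \<longrightarrow> finite W \<longrightarrow> W \<in> con A"
      have "config A K"
      proof (rule configI)
        show "K \<subseteq> evs A" using KU config_sub_evs[OF cc1] config_sub_evs[OF cc2] by blast
      next
        fix e e' assume "e \<in> K" "leq A e' e"
        then show "e' \<in> K" unfolding KU using config_down[OF g cc1] config_down[OF g cc2] by blast
      next
        fix X assume "X \<subseteq> K" "finite X" then show "X \<in> con A" using a by blast
      qed
      then show False using nK unfolding K_def by simp
    qed
    then show ?thesis using that by blast
  qed
  have a1W: "a1 \<in> W"
  proof (rule ccontr)
    assume "a1 \<notin> W" then have "W \<subseteq> c2" using W(1) unfolding K_def c2_def by blast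
    then show False using config_con[OF cc2 _ W(2)] W(3) by blast
  qed
  have Wc1: "W - {a2} \<subseteq> c1" using W(1) unfolding K_def c1_def by blast
  have a2c2: "a2 \<in> c2" unfolding c2_def by blast
  define X where "X = E1 A ` (W - {a2}) \<union> {E2 A a2}"
  have XD: "X \<subseteq> D_ev A" unfolding X_def using E1_props(1)[OF g cc1] E2_props(1)[OF g cc2 a2c2] Wc1 by blast
  have fX: "finite X" unfolding X_def using W(2) by simp
  have Xinfo: "\<exists>a' x y1 y2 \<chi>. d' = (qset x y1 y2, qord A x y1 y2 \<chi>) \<and> x \<subseteq> insert a' z \<and>
      y1 \<subseteq> insert a' z \<and> y2 \<subseteq> insert a' z \<and> a' \<notin> z \<and> \<not> pol A a' \<and>
      x \<subseteq> evs A \<and> y1 \<subseteq> evs A \<and> y2 \<subseteq> evs A \<and> y1 \<subseteq> c1 \<and> y2 \<subseteq> c2" if "d' \<in> X" for d'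
  proof -
    have ev1: "c1 \<subseteq> evs A" "c2 \<subseteq> evs A" using config_sub_evs cc1 cc2 by auto
    from that consider e where "e \<in> W - {a2}" "d' = E1 A e" | "d' = E2 A a2" unfolding X_def by blast
    then show ?thesis
    proof cases
      case 1
      then have ec: "e \<in> c1" using Wc1 by blast
      note dp = dn_props[OF g cc1 ec]
      show ?thesis
        apply (rule exI[of _ a1], rule exI[of _ "dn A e"], rule exI[of _ "NN A e"], rule exI[of _ "{}"],
            rule exI[of _ "\<lambda>_. 1"])
        using 1(2) dp ev1 nz np unfolding E1_def c1_def by auto
    next
      case 2
      note dp = dn_props[OF g cc2 a2c2]
      show ?thesis
        apply (rule exI[of _ a2], rule exI[of _ "dn A a2"], rule exI[of _ "{}"], rule exI[of _ "NN A a2"],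
            rule exI[of _ "\<lambda>_. 2"])
        using 2 dp ev1 nz np unfolding E2_def c2_def by auto
    qed
  qed
  define Y where "Y = {d \<in> D_down A X. \<not> D_pol A d}"
  have YD: "Y \<subseteq> D_ev A" unfolding Y_def D_down_def by blast
  have fY: "finite Y" using Ddown_finite[OF fX XD] unfolding Y_def by simp
  define Z where "Z = delta ` D_down A Y"
  have Zsub: "\<exists>d'\<in>X. s \<in> fst d'" if "s \<in> Z" for s
  proof -
    from that obtain d where d: "d \<in> D_down A Y" "s = delta d" unfolding Z_def by blast
    from Ddown_delta[OF g d(1)] obtain d'' where "d'' \<in> Y" "s \<in> fst d''" using d(2) by blast
    then have "d'' \<in> D_down A X" unfolding Y_def by blast
    from Ddown_delta[OF g this] show ?thesis using \<open>s \<in> fst d''\<close> by blast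
  qed
  have fZ: "finite Z" unfolding Z_def using Ddown_finite[OF fY YD] by simp
  have Zev: "Z \<subseteq> par_evs A" using Zsub XD Dev_comp(2) unfolding par_evs_def by blast
  have Z1: "{a. (1, a) \<in> Z} \<subseteq> c1"
  proof
    fix a assume "a \<in> {a. (1, a) \<in> Z}"
    then obtain d' where "d' \<in> X" "(1, a) \<in> fst d'" using Zsub by blast
    then show "a \<in> c1" using Xinfo unfolding qset_def by fastforce
  qed
  have Z2: "{a. (2, a) \<in> Z} \<subseteq> c2"
  proof
    fix a assume "a \<in> {a. (2, a) \<in> Z}"
    then obtain d' where "d' \<in> X" "(2, a) \<in> fst d'" using Zsub by blast
    then show "a \<in> c2" using Xinfo unfolding qset_def by fastforce
  qed
  have Z0: "{a. (0, a) \<in> Z} \<subseteq> z"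
  proof
    fix b assume "b \<in> {a. (0, a) \<in> Z}"
    then obtain d where d: "d \<in> D_down A Y" "delta d = (0, b)" unfolding Z_def by force
    then obtain d'' where d'': "d'' \<in> Y" "D_le d d''" "d \<in> D_ev A" unfolding D_down_def by blast
    then have d''X: "d'' \<in> D_down A X" "\<not> D_pol A d''" unfolding Y_def by auto
    then obtain d' where d': "d' \<in> X" "D_le d'' d'" "d'' \<in> D_ev A" unfolding D_down_def by blast
    have "(0, b) \<in> fst d" using Dev_delta[OF g d''(3)] d(2) by simp
    then have b1: "(0, b) \<in> fst d''" using d''(2) unfolding D_le_def by blast
    define t where "t = delta d''"
    have tt: "t \<in> fst d''" "((0, b), t) \<in> snd d''" using Dev_delta[OF g d'(3)] b1 unfolding t_def by auto
    then have tt': "t \<in> fst d'" "((0, b), t) \<in> snd d'" using d'(2) unfolding D_le_def by auto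
    obtain a' x y1 y2 \<chi> where I: "d' = (qset x y1 y2, qord A x y1 y2 \<chi>)" "x \<subseteq> insert a' z"
      "y1 \<subseteq> insert a' z" "y2 \<subseteq> insert a' z" "a' \<notin> z" "\<not> pol A a'"
      "x \<subseteq> evs A" "y1 \<subseteq> evs A" "y2 \<subseteq> evs A"
      using Xinfo[OF d'(1)] by blast
    have s: "x \<subseteq> evs A" "y1 \<subseteq> evs A" "y2 \<subseteq> evs A" using I by auto
    have tQ: "t \<in> qset x y1 y2" and bt: "((0, b), t) \<in> qord A x y1 y2 \<chi>" using tt' I(1) by auto
    have "(0, b) \<in> qset x y1 y2" using qord_sub bt by blast
    then have bx: "b \<in> x" unfolding qset_def by auto
    have st: "snd t \<in> insert a' z" using tQ I(2-4) unfolding qset_def by auto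
    have bev: "b \<in> evs A" using bx s by blast
    have lb: "leq A b (snd t)"
    proof (cases "(0, b) = t")
      case True then show ?thesis using g_refl[OF g bev] by auto
    next
      case False
      then have "((0, b), t) \<in> (qbase A x y1 y2 \<chi>)\<^sup>+" using bt unfolding qord_def by (auto simp: Id_on_def)
      from qtrancl_leq[OF g s this] show ?thesis by simp
    qed
    show "b \<in> z"
    proof (rule ccontr)
      assume bz: "b \<notin> z"
      have "snd t \<notin> z" using bz lb config_down[OF g cz] by blast
      then have sa: "snd t = a'" using st by blast
      have "b \<in> insert a' z" using bx I(2) by blast
      then have ba: "b = a'" using bz by blast
      have pt: "\<not> par_pol A t" using d''X(2) unfolding D_pol_def t_def by simp
      have ft: "fst t \<noteq> 0" using pt sa I(6) unfolding par_pol_def by (cases "fst t = 0") auto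
      have "(0, b) \<noteq> t" using ft by auto
      then have tr: "((0, b), t) \<in> (qbase A x y1 y2 \<chi>)\<^sup>+" using bt unfolding qord_def by (auto simp: Id_on_def)
      have "snd (0, b) = snd t" using sa ba by simp
      then have "\<not> pol A (snd t) \<longrightarrow> fst t = 0 \<or> fst (0::nat, b) = fst t"
        using qtrancl_same[OF g s tr] by blast
      then show False using ft sa I(6) by auto
    qed
  qed
  have "D_con A Y"
    unfolding D_con_def par_con_def
  proof (intro conjI ballI)
    show "finite Y" "Y \<subseteq> D_ev A" by fact+
    show "finite (delta ` D_down A Y)" using fZ unfolding Z_def .
    show "delta ` D_down A Y \<subseteq> par_evs A" using Zev unfolding Z_def .
  next
    fix i :: nat assume i: "i \<in> {0,1,2}"
    have fi: "finite {a. (i, a) \<in> Z}"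
    proof -
      have "{a. (i, a) \<in> Z} \<subseteq> snd ` Z" by force
      then show ?thesis using fZ finite_subset by blast
    qed
    from i consider "i = 0" | "i = 1" | "i = 2" by blast
    then have "{a. (i, a) \<in> Z} \<in> con A"
    proof cases
      case 1 then show ?thesis using config_con[OF cz Z0] fi by simp
    next
      case 2 then show ?thesis using config_con[OF cc1 Z1] fi by simp
    next
      case 3 then show ?thesis using config_con[OF cc2 Z2] fi by simp
    qed
    then show "{a. (i, a) \<in> delta ` D_down A Y} \<in> con A" unfolding Z_def .
  qed
  then have "D_con A X" using det fX XD unfolding D_deterministic_def Y_def by blast
  then have c0: "{a. (0, a) \<in> delta ` D_down A X} \<in> con A" unfolding D_con_def par_con_def by blast
  have "W \<subseteq> {a. (0, a) \<in> delta ` D_down A X}"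
  proof
    fix e assume eW: "e \<in> W"
    show "e \<in> {a. (0, a) \<in> delta ` D_down A X}"
    proof (cases "e = a2")
      case True
      have "E2 A a2 \<in> D_down A X" unfolding D_down_def X_def
        using E2_props(1)[OF g cc2 a2c2] Dev_le_refl[OF E2_props(1)[OF g cc2 a2c2]] by blast
      then show ?thesis using E2_props(2)[OF g cc2 a2c2] True by force
    next
      case False
      then have ew: "e \<in> W - {a2}" "e \<in> c1" using eW Wc1 by auto
      have "E1 A e \<in> D_down A X" unfolding D_down_def X_def
        using E1_props(1)[OF g cc1 ew(2)] Dev_le_refl[OF E1_props(1)[OF g cc1 ew(2)]] ew(1) by blast
      then show ?thesis using E1_props(2)[OF g cc1 ew(2)] by force
    qed
  qed
  then show False using g_con_sub[OF g c0] W(3) by blast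
qed

theorem mainTheorem16:
  fixes A :: "'a game"
  assumes "is_game A" and "race_free A"
  shows "D_deterministic A \<longleftrightarrow> no_neg_conflict A"
  using nc_of_det[OF assms(1)] det_of_nc[OF assms(1,2)] by blast


end
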